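(* Let $\mathbf{H}$ be any one of the four history systems $\mathbf{G3N}^{Hist}$, $\mathbf{G3NeF}^{Hist}$, $\mathbf{G3CoPC}^{Hist}$, $\mathbf{G3MPC}^{Hist}$. Contraction is admissible in $\mathbf{H}$: for every finite set of formulas $\mathcal H$, finite multiset $\Gamma$ and formulas $\alpha,\varphi$, if $\mathcal H\mid\Gamma,\alpha,\alpha\Rightarrow\varphi$ is derivable in $\mathbf{H}$, then $\mathcal H\mid\Gamma,\alpha\Rightarrow\varphi$ is derivable in $\mathbf{H}$.
   Context: Formulas are generated from a countable set of propositional variables $p,q,\dots$ and the constant $\top$ by the grammar $\varphi::= p\mid\top\mid\varphi\wedge\varphi\mid\varphi\vee\varphi\mid\varphi\to\varphi\mid\neg\varphi$ (there is no constant $\bot$). A history sequent is an expression $\mathcal H\mid\Gamma\Rightarrow\varphi$ where $\mathcal H$ (the history) is a finite set of formulas, $\Gamma$ is a finite multiset of formulas and $\varphi$ is a formula (the goal). $(\psi,\mathcal H)$ denotes $\mathcal H\cup\{\psi\}$, $\emptyset$ is the empty history, $\Gamma,\alpha$ denotes $\Gamma$ with one more occurrence of $\alpha$, and "$\alpha\in\Gamma$" means $\alpha$ occurs in $\Gamma$. History rules ($p$ a propositional variable; side conditions after "if"): (ax) $\mathcal H\mid\Gamma,p\Rightarrow p$; ($\top$) $\mathcal H\mid\Gamma\Rightarrow\top$; ($\to$r$_1$) from $\emptyset\mid\Gamma,\alpha\Rightarrow\beta$ infer $\mathcal H\mid\Gamma\Rightarrow\alpha\to\beta$, if $\alpha\notin\Gamma$;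 ($\to$r$_2$) from $\mathcal H\mid\Gamma\Rightarrow\beta$ infer $\mathcal H\mid\Gamma\Rightarrow\alpha\to\beta$, if $\alpha\in\Gamma$; ($\to$l) from $(\varphi,\mathcal H)\mid\Gamma,\alpha\to\beta\Rightarrow\alpha$ and $\emptyset\mid\Gamma,\alpha\to\beta,\beta\Rightarrow\varphi$ infer $\mathcal H\mid\Gamma,\alpha\to\beta\Rightarrow\varphi$, if $\varphi\notin\mathcal H$ and $\beta\notin\Gamma$; ($\wedge$r) from $\mathcal H\mid\Gamma\Rightarrow\alpha$ and $\mathcal H\mid\Gamma\Rightarrow\beta$ infer $\mathcal H\mid\Gamma\Rightarrow\alpha\wedge\beta$; ($\wedge$l$_1$) from $\emptyset\mid\Gamma,\alpha\wedge\beta,\alpha\Rightarrow\varphi$ infer $\mathcal H\mid\Gamma,\alpha\wedge\beta\Rightarrow\varphi$, if $\alpha\notin\Gamma$; ($\wedge$l$_2$) from $\emptyset\mid\Gamma,\alpha\wedge\beta,\beta\Rightarrow\varphi$ infer $\mathcal H\mid\Gamma,\alpha\wedge\beta\Rightarrow\varphi$, if $\beta\notin\Gamma$; ($\vee$r$_1$), ($\vee$r$_2$) from $\mathcal H\mid\Gamma\Rightarrow\alpha$ (resp. $\mathcal H\mid\Gamma\Rightarrow\beta$) infer $\mathcal H\mid\Gamma\Rightarrow\alpha\vee\beta$; ($\vee$l) from $\emptyset\mid\Gamma,\alpha\vee\beta,\alpha\Rightarrow\varphi$ and $\emptyset\mid\Gamma,\alpha\vee\beta,\beta\Rightarrow\varphi$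 infer $\mathcal H\mid\Gamma,\alpha\vee\beta\Rightarrow\varphi$, if $\alpha,\beta\notin\Gamma$; (n$_1$) from $\emptyset\mid\Gamma,\neg\alpha,\beta\Rightarrow\alpha$ and $\emptyset\mid\Gamma,\neg\alpha,\alpha\Rightarrow\beta$ infer $\mathcal H\mid\Gamma,\neg\alpha\Rightarrow\neg\beta$, if $\beta\notin\Gamma\cup\{\neg\alpha\}$ and $\alpha\notin\Gamma$; (n$_2$) from $\emptyset\mid\Gamma,\neg\alpha,\beta\Rightarrow\alpha$ and $\mathcal H\mid\Gamma,\neg\alpha\Rightarrow\beta$ infer $\mathcal H\mid\Gamma,\neg\alpha\Rightarrow\neg\beta$, if $\beta\notin\Gamma\cup\{\neg\alpha\}$ and $\alpha\in\Gamma$; (n$_3$) from $(\neg\beta,\mathcal H)\mid\Gamma,\neg\alpha\Rightarrow\alpha$ and $\emptyset\mid\Gamma,\neg\alpha,\alpha\Rightarrow\beta$ infer $\mathcal H\mid\Gamma,\neg\alpha\Rightarrow\neg\beta$, if $\neg\beta\notin\mathcal H$, $\beta\in\Gamma\cup\{\neg\alpha\}$ and $\alpha\notin\Gamma$; (n$_4$) from $(\neg\beta,\mathcal H)\mid\Gamma,\neg\alpha\Rightarrow\alpha$ and $\mathcal H\mid\Gamma,\neg\alpha\Rightarrow\beta$ infer $\mathcal H\mid\Gamma,\neg\alpha\Rightarrow\neg\beta$, if $\neg\beta\notin\mathcal H$, $\beta\in\Gamma\cup\{\neg\alpha\}$ and $\alpha\in\Gamma$; (nef) from $(\neg\beta,\mathcal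 H)\mid\Gamma,\neg\alpha\Rightarrow\alpha$ infer $\mathcal H\mid\Gamma,\neg\alpha\Rightarrow\neg\beta$, if $\neg\beta\notin\mathcal H$; (copc$_1$) from $\emptyset\mid\Gamma,\neg\alpha,\beta\Rightarrow\alpha$ infer $\mathcal H\mid\Gamma,\neg\alpha\Rightarrow\neg\beta$, if $\beta\notin\Gamma\cup\{\neg\alpha\}$; (copc$_2$) from $(\neg\beta,\mathcal H)\mid\Gamma,\neg\alpha\Rightarrow\alpha$ infer $\mathcal H\mid\Gamma,\neg\alpha\Rightarrow\neg\beta$, if $\neg\beta\notin\mathcal H$ and $\beta\in\Gamma\cup\{\neg\alpha\}$; (an) from $\emptyset\mid\Gamma,\alpha\Rightarrow\neg\alpha$ infer $\mathcal H\mid\Gamma\Rightarrow\neg\alpha$, if $\alpha\notin\Gamma$. In addition, the left rules ($\to$l), ($\wedge$l$_1$), ($\wedge$l$_2$), ($\vee$l) may only be applied when the goal $\varphi$ of the conclusion is a propositional variable, a negation or a disjunction. The positive history rules are (ax) through ($\vee$l). The four history systems are: $\mathbf{G3N}^{Hist}$ = positive history rules + (n$_1$)–(n$_4$); $\mathbf{G3NeF}^{Hist}$ = positive history rules + (n$_1$)–(n$_4$) + (nef); $\mathbf{G3CoPC}^{Hist}$ = positive history rules + (copc$_1$), (copc$_2$); $\mathbf{G3MPC}^{Hist}$ = positive history rules + (copc$_1$), (copc$_2$), (an). A derivation is a finite tree of rule instances whose leaves are instances of (ax) or ($\top$). *)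

theory Defs
  imports Main "HOL-Library.Multiset"
begin

datatype fm = Var nat | Top | And fm fm | Or fm fm | Imp fm fm | Neg fm

datatype sys = G3N | G3NeF | G3CoPC | G3MPC

text \<open>Goals on which left rules may be applied: variable, negation or disjunction.\<close>
fun lgoal :: "fm \<Rightarrow> bool" where
  "lgoal (Var p) = True"
| "lgoal (Neg a) = True"
| "lgoal (Or a b) = True"
| "lgoal _ = False"

definition has_n :: "sys \<Rightarrow> bool" where
  "has_n S \<longleftrightarrow> S = G3N \<or> S = G3NeF"

definition has_copc :: "sys \<Rightarrow> bool" where
  "has_copc S \<longleftrightarrow> S = G3CoPC \<or> S = G3MPC"

text \<open>deriv S H \<Gamma> \<phi>: the history sequent H | \<Gamma> \<Rightarrow> \<phi> is derivable in system S.\<close>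
inductive deriv :: "sys \<Rightarrow> fm set \<Rightarrow> fm multiset \<Rightarrow> fm \<Rightarrow> bool" where
  ax: "deriv S H (add_mset (Var p) \<Gamma>) (Var p)"
| top: "deriv S H \<Gamma> Top"
| impR1: "\<lbrakk> a \<notin># \<Gamma>; deriv S {} (add_mset a \<Gamma>) b \<rbrakk> \<Longrightarrow> deriv S H \<Gamma> (Imp a b)"
| impR2: "\<lbrakk> a \<in># \<Gamma>; deriv S H \<Gamma> b \<rbrakk> \<Longrightarrow> deriv S H \<Gamma> (Imp a b)"
| impL: "\<lbrakk> lgoal \<phi>; \<phi> \<notin> H; b \<notin># \<Gamma>;
           deriv S (insert \<phi> H) (add_mset (Imp a b) \<Gamma>) a;
           deriv S {} (add_mset b (add_mset (Imp a b) \<Gamma>)) \<phi> \<rbrakk>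
         \<Longrightarrow> deriv S H (add_mset (Imp a b) \<Gamma>) \<phi>"
| andR: "\<lbrakk> deriv S H \<Gamma> a; deriv S H \<Gamma> b \<rbrakk> \<Longrightarrow> deriv S H \<Gamma> (And a b)"
| andL1: "\<lbrakk> lgoal \<phi>; a \<notin># \<Gamma>; deriv S {} (add_mset a (add_mset (And a b) \<Gamma>)) \<phi> \<rbrakk>
         \<Longrightarrow> deriv S H (add_mset (And a b) \<Gamma>) \<phi>"
| andL2: "\<lbrakk> lgoal \<phi>; b \<notin># \<Gamma>; deriv S {} (add_mset b (add_mset (And a b) \<Gamma>)) \<phi> \<rbrakk>
         \<Longrightarrow> deriv S H (add_mset (And a b) \<Gamma>) \<phi>"
| orR1: "deriv S H \<Gamma> a \<Longrightarrow> deriv S H \<Gamma> (Or a b)"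
| orR2: "deriv S H \<Gamma> b \<Longrightarrow> deriv S H \<Gamma> (Or a b)"
| orL: "\<lbrakk> lgoal \<phi>; a \<notin># \<Gamma>; b \<notin># \<Gamma>;
          deriv S {} (add_mset a (add_mset (Or a b) \<Gamma>)) \<phi>;
          deriv S {} (add_mset b (add_mset (Or a b) \<Gamma>)) \<phi> \<rbrakk>
        \<Longrightarrow> deriv S H (add_mset (Or a b) \<Gamma>) \<phi>"
| n1: "\<lbrakk> has_n S; b \<notin># \<Gamma>; b \<noteq> Neg a; a \<notin># \<Gamma>;
         deriv S {} (add_mset b (add_mset (Neg a) \<Gamma>)) a;
         deriv S {} (add_mset a (add_mset (Neg a) \<Gamma>)) b \<rbrakk>
       \<Longrightarrow> deriv S H (add_mset (Neg a) \<Gamma>) (Neg b)"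
| n2: "\<lbrakk> has_n S; b \<notin># \<Gamma>; b \<noteq> Neg a; a \<in># \<Gamma>;
         deriv S {} (add_mset b (add_mset (Neg a) \<Gamma>)) a;
         deriv S H (add_mset (Neg a) \<Gamma>) b \<rbrakk>
       \<Longrightarrow> deriv S H (add_mset (Neg a) \<Gamma>) (Neg b)"
| n3: "\<lbrakk> has_n S; Neg b \<notin> H; b \<in># \<Gamma> \<or> b = Neg a; a \<notin># \<Gamma>;
         deriv S (insert (Neg b) H) (add_mset (Neg a) \<Gamma>) a;
         deriv S {} (add_mset a (add_mset (Neg a) \<Gamma>)) b \<rbrakk>
       \<Longrightarrow> deriv S H (add_mset (Neg a) \<Gamma>) (Neg b)"
| n4: "\<lbrakk> has_n S; Neg b \<notin> H; b \<in># \<Gamma> \<or> b = Neg a; a \<in># \<Gamma>;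
         deriv S (insert (Neg b) H) (add_mset (Neg a) \<Gamma>) a;
         deriv S H (add_mset (Neg a) \<Gamma>) b \<rbrakk>
       \<Longrightarrow> deriv S H (add_mset (Neg a) \<Gamma>) (Neg b)"
| nef: "\<lbrakk> S = G3NeF; Neg b \<notin> H;
          deriv S (insert (Neg b) H) (add_mset (Neg a) \<Gamma>) a \<rbrakk>
        \<Longrightarrow> deriv S H (add_mset (Neg a) \<Gamma>) (Neg b)"
| copc1: "\<lbrakk> has_copc S; b \<notin># \<Gamma>; b \<noteq> Neg a;
            deriv S {} (add_mset b (add_mset (Neg a) \<Gamma>)) a \<rbrakk>
          \<Longrightarrow> deriv S H (add_mset (Neg a) \<Gamma>) (Neg b)"
| copc2: "\<lbrakk> has_copc S; Neg b \<notin> H; b \<in># \<Gamma> \<or> b = Neg a;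
            deriv S (insert (Neg b) H) (add_mset (Neg a) \<Gamma>) a \<rbrakk>
          \<Longrightarrow> deriv S H (add_mset (Neg a) \<Gamma>) (Neg b)"
| an: "\<lbrakk> S = G3MPC; a \<notin># \<Gamma>; deriv S {} (add_mset a \<Gamma>) (Neg a) \<rbrakk>
       \<Longrightarrow> deriv S H \<Gamma> (Neg a)"

end

theory Submission
  imports Defs
begin

lemma dec: "set_mset (add_mset x \<Gamma>) = set_mset D \<Longrightarrow>
  (\<And>G. D = add_mset x G \<Longrightarrow> insert x (set_mset G) = insert x (set_mset \<Gamma>) \<Longrightarrow> P) \<Longrightarrow> P"
proof -
  assume a: "set_mset (add_mset x \<Gamma>) = set_mset D"
    and b: "\<And>G. D = add_mset x G \<Longrightarrow> insert x (set_mset G) = insert x (set_mset \<Gamma>) \<Longrightarrow> P"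
  have m: "x \<in># D" using a by auto
  hence e: "D = add_mset x (D - {#x#})" by simp
  have "insert x (set_mset (D - {#x#})) = set_mset D"
    by (metis e set_mset_add_mset_insert)
  thus P using b[OF e] a by simp
qed

lemma fm_ne[simp]: "b \<noteq> Imp a b" "a \<noteq> Imp a b" "a \<noteq> And a b" "b \<noteq> And a b"
  "a \<noteq> Or a b" "b \<noteq> Or a b" "a \<noteq> Neg a"
  by (induction b) auto

lemma setinv: "deriv S H D \<phi> \<Longrightarrow> set_mset D = set_mset D' \<Longrightarrow> deriv S H D' \<phi>"
proof (induction arbitrary: D' rule: deriv.induct)
  case (ax S H p \<Gamma>)
  then have "Var p \<in># D'" by auto
  then have "D' = add_mset (Var p) (D' - {#Var p#})" by simp
  then show ?case by (metis deriv.ax)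
next
  case (top S H \<Gamma>)
  then show ?case by (simp add: deriv.top)
next
  case (impR1 a \<Gamma> S b H)
  show ?case apply (rule deriv.impR1)
    subgoal using impR1.hyps impR1.prems by (metis set_mset_add_mset_insert)
    subgoal by (rule impR1.IH) (simp add: impR1.prems)
    done
next
  case (impR2 a \<Gamma> S H b)
  show ?case by (rule deriv.impR2) (use impR2.hyps impR2.prems in blast, rule impR2.IH[OF impR2.prems])
next
  case (impL \<phi> H b \<Gamma> S a)
  from impL.prems show ?case
  proof (rule dec)
    fix G assume G: "D' = add_mset (Imp a b) G" "insert (Imp a b) (set_mset G) = insert (Imp a b) (set_mset \<Gamma>)"
    have G3: "\<And>y. y \<noteq> Imp a b \<Longrightarrow> (y \<in># G) = (y \<in># \<Gamma>)" using G(2) by blast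
    show ?thesis unfolding G(1)
      apply (rule deriv.impL)
      subgoal using impL.hyps G3 fm_ne by (simp; blast)
      subgoal using impL.hyps G3 fm_ne by (simp; blast)
      subgoal using impL.hyps G3 fm_ne by (simp; blast)
      subgoal by (rule impL.IH(1)) (simp add: G(2))
      subgoal by (rule impL.IH(2)) (simp add: G(2))
      done
  qed
next
  case (andR S H \<Gamma> a b)
  show ?case by (rule deriv.andR[OF andR.IH(1)[OF andR.prems] andR.IH(2)[OF andR.prems]])
next
  case (andL1 \<phi> a \<Gamma> S b H)
  from andL1.prems show ?case
  proof (rule dec)
    fix G assume G: "D' = add_mset (And a b) G" "insert (And a b) (set_mset G) = insert (And a b) (set_mset \<Gamma>)"
    have G3: "\<And>y. y \<noteq> And a b \<Longrightarrow> (y \<in># G) = (y \<in># \<Gamma>)" using G(2) by blast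
    show ?thesis unfolding G(1)
      apply (rule deriv.andL1)
      subgoal using andL1.hyps G3 fm_ne by (simp; blast)
      subgoal using andL1.hyps G3 fm_ne by (simp; blast)
      subgoal by (rule andL1.IH(1)) (simp add: G(2))
      done
  qed
next
  case (andL2 \<phi> b \<Gamma> S a H)
  from andL2.prems show ?case
  proof (rule dec)
    fix G assume G: "D' = add_mset (And a b) G" "insert (And a b) (set_mset G) = insert (And a b) (set_mset \<Gamma>)"
    have G3: "\<And>y. y \<noteq> And a b \<Longrightarrow> (y \<in># G) = (y \<in># \<Gamma>)" using G(2) by blast
    show ?thesis unfolding G(1)
      apply (rule deriv.andL2)
      subgoal using andL2.hyps G3 fm_ne by (simp; blast)
      subgoal using andL2.hyps G3 fm_ne by (simp; blast)
      subgoal by (rule andL2.IH(1)) (simp add: G(2))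
      done
  qed
next
  case (orR1 S H \<Gamma> a b)
  show ?case by (rule deriv.orR1[OF orR1.IH[OF orR1.prems]])
next
  case (orR2 S H \<Gamma> b a)
  show ?case by (rule deriv.orR2[OF orR2.IH[OF orR2.prems]])
next
  case (orL \<phi> a \<Gamma> b S H)
  from orL.prems show ?case
  proof (rule dec)
    fix G assume G: "D' = add_mset (Or a b) G" "insert (Or a b) (set_mset G) = insert (Or a b) (set_mset \<Gamma>)"
    have G3: "\<And>y. y \<noteq> Or a b \<Longrightarrow> (y \<in># G) = (y \<in># \<Gamma>)" using G(2) by blast
    show ?thesis unfolding G(1)
      apply (rule deriv.orL)
      subgoal using orL.hyps G3 fm_ne by (simp; blast)
      subgoal using orL.hyps G3 fm_ne by (simp; blast)
      subgoal using orL.hyps G3 fm_ne by (simp; blast)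
      subgoal by (rule orL.IH(1)) (simp add: G(2))
      subgoal by (rule orL.IH(2)) (simp add: G(2))
      done
  qed
next
  case (n1 S b \<Gamma> a H)
  from n1.prems show ?case
  proof (rule dec)
    fix G assume G: "D' = add_mset (Neg a) G" "insert (Neg a) (set_mset G) = insert (Neg a) (set_mset \<Gamma>)"
    have G3: "\<And>y. y \<noteq> Neg a \<Longrightarrow> (y \<in># G) = (y \<in># \<Gamma>)" using G(2) by blast
    show ?thesis unfolding G(1)
      apply (rule deriv.n1)
      subgoal using n1.hyps G3 fm_ne by (simp; blast)
      subgoal using n1.hyps G3 fm_ne by (simp; blast)
      subgoal using n1.hyps G3 fm_ne by (simp; blast)
      subgoal using n1.hyps G3 fm_ne by (simp; blast)
      subgoal by (rule n1.IH(1)) (simp add: G(2))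
      subgoal by (rule n1.IH(2)) (simp add: G(2))
      done
  qed
next
  case (n2 S b \<Gamma> a H)
  from n2.prems show ?case
  proof (rule dec)
    fix G assume G: "D' = add_mset (Neg a) G" "insert (Neg a) (set_mset G) = insert (Neg a) (set_mset \<Gamma>)"
    have G3: "\<And>y. y \<noteq> Neg a \<Longrightarrow> (y \<in># G) = (y \<in># \<Gamma>)" using G(2) by blast
    show ?thesis unfolding G(1)
      apply (rule deriv.n2)
      subgoal using n2.hyps G3 fm_ne by (simp; blast)
      subgoal using n2.hyps G3 fm_ne by (simp; blast)
      subgoal using n2.hyps G3 fm_ne by (simp; blast)
      subgoal using n2.hyps G3 fm_ne by (simp; blast)
      subgoal by (rule n2.IH(1)) (simp add: G(2))
      subgoal by (rule n2.IH(2)) (simp add: G(2))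
      done
  qed
next
  case (n3 S b H \<Gamma> a)
  from n3.prems show ?case
  proof (rule dec)
    fix G assume G: "D' = add_mset (Neg a) G" "insert (Neg a) (set_mset G) = insert (Neg a) (set_mset \<Gamma>)"
    have G3: "\<And>y. y \<noteq> Neg a \<Longrightarrow> (y \<in># G) = (y \<in># \<Gamma>)" using G(2) by blast
    show ?thesis unfolding G(1)
      apply (rule deriv.n3)
      subgoal using n3.hyps G3 fm_ne by (simp; blast)
      subgoal using n3.hyps G3 fm_ne by (simp; blast)
      subgoal using n3.hyps G3 fm_ne by (simp; blast)
      subgoal using n3.hyps G3 fm_ne by (simp; blast)
      subgoal by (rule n3.IH(1)) (simp add: G(2))
      subgoal by (rule n3.IH(2)) (simp add: G(2))
      done
  qed
next
  case (n4 S b H \<Gamma> a)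
  from n4.prems show ?case
  proof (rule dec)
    fix G assume G: "D' = add_mset (Neg a) G" "insert (Neg a) (set_mset G) = insert (Neg a) (set_mset \<Gamma>)"
    have G3: "\<And>y. y \<noteq> Neg a \<Longrightarrow> (y \<in># G) = (y \<in># \<Gamma>)" using G(2) by blast
    show ?thesis unfolding G(1)
      apply (rule deriv.n4)
      subgoal using n4.hyps G3 fm_ne by (simp; blast)
      subgoal using n4.hyps G3 fm_ne by (simp; blast)
      subgoal using n4.hyps G3 fm_ne by (simp; blast)
      subgoal using n4.hyps G3 fm_ne by (simp; blast)
      subgoal by (rule n4.IH(1)) (simp add: G(2))
      subgoal by (rule n4.IH(2)) (simp add: G(2))
      done
  qed
next
  case (nef S b H a \<Gamma>)
  from nef.prems show ?case
  proof (rule dec)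
    fix G assume G: "D' = add_mset (Neg a) G" "insert (Neg a) (set_mset G) = insert (Neg a) (set_mset \<Gamma>)"
    have G3: "\<And>y. y \<noteq> Neg a \<Longrightarrow> (y \<in># G) = (y \<in># \<Gamma>)" using G(2) by blast
    show ?thesis unfolding G(1)
      apply (rule deriv.nef)
      subgoal using nef.hyps G3 fm_ne by (simp; blast)
      subgoal using nef.hyps G3 fm_ne by (simp; blast)
      subgoal by (rule nef.IH(1)) (simp add: G(2))
      done
  qed
next
  case (copc1 S b \<Gamma> a H)
  from copc1.prems show ?case
  proof (rule dec)
    fix G assume G: "D' = add_mset (Neg a) G" "insert (Neg a) (set_mset G) = insert (Neg a) (set_mset \<Gamma>)"
    have G3: "\<And>y. y \<noteq> Neg a \<Longrightarrow> (y \<in># G) = (y \<in># \<Gamma>)" using G(2) by blast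
    show ?thesis unfolding G(1)
      apply (rule deriv.copc1)
      subgoal using copc1.hyps G3 fm_ne by (simp; blast)
      subgoal using copc1.hyps G3 fm_ne by (simp; blast)
      subgoal using copc1.hyps G3 fm_ne by (simp; blast)
      subgoal by (rule copc1.IH(1)) (simp add: G(2))
      done
  qed
next
  case (copc2 S b H \<Gamma> a)
  from copc2.prems show ?case
  proof (rule dec)
    fix G assume G: "D' = add_mset (Neg a) G" "insert (Neg a) (set_mset G) = insert (Neg a) (set_mset \<Gamma>)"
    have G3: "\<And>y. y \<noteq> Neg a \<Longrightarrow> (y \<in># G) = (y \<in># \<Gamma>)" using G(2) by blast
    show ?thesis unfolding G(1)
      apply (rule deriv.copc2)
      subgoal using copc2.hyps G3 fm_ne by (simp; blast)
      subgoal using copc2.hyps G3 fm_ne by (simp; blast)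
      subgoal using copc2.hyps G3 fm_ne by (simp; blast)
      subgoal by (rule copc2.IH(1)) (simp add: G(2))
      done
  qed
next
  case (an S a \<Gamma> H)
  show ?case apply (rule deriv.an)
    subgoal using an.hyps by blast
    subgoal using an.hyps an.prems by (metis)
    subgoal by (rule an.IH) (simp add: an.prems)
    done
qed

theorem lemma5p3:
  fixes S :: sys and H :: "fm set" and \<Gamma> :: "fm multiset" and \<alpha> \<phi> :: fm
  assumes "finite H"
    and "deriv S H (add_mset \<alpha> (add_mset \<alpha> \<Gamma>)) \<phi>"
  shows "deriv S H (add_mset \<alpha> \<Gamma>) \<phi>"
  using setinv[OF assms(2)] by simp

end
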